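(* Let $\Theta=(\theta,w)$ be a twisted partial action of a group $G$ on an inverse semigroup $S$. Then the crossed product $S*_\Theta G$ is an inverse semigroup, and for every $s\delta_x\in S*_\Theta G$, $$(s\delta_x)^{-1}=w_{x^{-1},x}^{-1}\theta_{x^{-1}}(s^{-1})\delta_{x^{-1}}.$$
   Context: A multiplier of a semigroup $T$ is a pair $(L,R)$ of maps $T\to T$ with $L(st)=L(s)t$, $R(st)=sR(t)$, $sL(t)=R(s)t$; write $ws=L(s)$, $sw=R(s)$. Multipliers form a monoid $\mathcal M(T)$ with $(L,R)(L',R')=(L\circ L',R'\circ R)$, with unit group $\mathcal U(\mathcal M(T))$. A twisted partial action of $G$ on a semigroup $S$ is $\Theta=(\theta,w)$, where $\theta_x:D_{x^{-1}}\to D_x$ ($x\in G$) are isomorphisms between nonempty ideals of $S$ and $w_{x,y}\in\mathcal U(\mathcal M(D_xD_{xy}))$, such that (i) $D_x^2=D_x$, $D_xD_y=D_yD_x$; (ii) $D_1=S$, $\theta_1=\mathrm{id}_S$; (iii) $\theta_x(D_{x^{-1}}D_y)=D_xD_{xy}$; (iv) $\theta_x(\theta_y(s))=w_{x,y}\theta_{xy}(s)w_{x,y}^{-1}$ for $s\in D_{y^{-1}}D_{y^{-1}x^{-1}}$; (v) $w_{1,x}=w_{x,1}$ are the identity multiplier of $D_x$; (vi) $\theta_x(sw_{y,z})w_{x,yz}=\theta_x(s)w_{x,y}w_{xy,z}$ for $s\in D_{x^{-1}}D_yD_{yz}$. The crossed product is $S*_\Theta G=\{s\delta_x: x\in G,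 s\in D_x\}$ with $s\delta_x\cdot t\delta_y=\theta_x(\theta_x^{-1}(s)t)w_{x,y}\delta_{xy}$; it is an associative semigroup. *)

theory Defs
  imports "HOL-Algebra.Group"
begin

definition semigroup_on :: "'a set \<Rightarrow> ('a \<Rightarrow> 'a \<Rightarrow> 'a) \<Rightarrow> bool" where
  "semigroup_on S mul \<longleftrightarrow>
     (\<forall>a\<in>S. \<forall>b\<in>S. mul a b \<in> S) \<and>
     (\<forall>a\<in>S. \<forall>b\<in>S. \<forall>c\<in>S. mul (mul a b) c = mul a (mul b c))"

definition inverse_semigroup_on :: "'a set \<Rightarrow> ('a \<Rightarrow> 'a \<Rightarrow> 'a) \<Rightarrow> bool" where
  "inverse_semigroup_on S mul \<longleftrightarrow> semigroup_on S mul \<and>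
     (\<forall>a\<in>S. \<exists>!b. b \<in> S \<and> mul (mul a b) a = a \<and> mul (mul b a) b = b)"

definition sg_inv :: "'a set \<Rightarrow> ('a \<Rightarrow> 'a \<Rightarrow> 'a) \<Rightarrow> 'a \<Rightarrow> 'a" where
  "sg_inv S mul a = (THE b. b \<in> S \<and> mul (mul a b) a = a \<and> mul (mul b a) b = b)"

definition setmul :: "('a \<Rightarrow> 'a \<Rightarrow> 'a) \<Rightarrow> 'a set \<Rightarrow> 'a set \<Rightarrow> 'a set" where
  "setmul mul A B = {mul a b | a b. a \<in> A \<and> b \<in> B}"

definition sg_ideal :: "'a set \<Rightarrow> ('a \<Rightarrow> 'a \<Rightarrow> 'a) \<Rightarrow> 'a set \<Rightarrow> bool" where
  "sg_ideal S mul I \<longleftrightarrow> I \<noteq> {} \<and> I \<subseteq> S \<and>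
     (\<forall>s\<in>S. \<forall>a\<in>I. mul s a \<in> I \<and> mul a s \<in> I)"

definition sg_iso :: "('a \<Rightarrow> 'a \<Rightarrow> 'a) \<Rightarrow> ('a \<Rightarrow> 'a) \<Rightarrow> 'a set \<Rightarrow> 'a set \<Rightarrow> bool" where
  "sg_iso mul f A B \<longleftrightarrow> bij_betw f A B \<and>
     (\<forall>a\<in>A. \<forall>b\<in>A. f (mul a b) = mul (f a) (f b))"

text \<open>A multiplier of T is a pair (L,R) of maps T \<rightarrow> T (we only look at their values on T),
  with L(st) = L(s)t, R(st) = sR(t), sL(t) = R(s)t.  We write w s = L s, s w = R s.\<close>
definition multiplier :: "('a \<Rightarrow> 'a \<Rightarrow> 'a) \<Rightarrow> 'a set \<Rightarrow> ('a \<Rightarrow> 'a) \<times> ('a \<Rightarrow> 'a) \<Rightarrow> bool" where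
  "multiplier mul T m \<longleftrightarrow>
     (\<forall>s\<in>T. fst m s \<in> T \<and> snd m s \<in> T) \<and>
     (\<forall>s\<in>T. \<forall>t\<in>T. fst m (mul s t) = mul (fst m s) t \<and>
                    snd m (mul s t) = mul s (snd m t) \<and>
                    mul s (fst m t) = mul (snd m s) t)"

text \<open>Units of the monoid M(T), with product (L,R)(L',R') = (L o L', R' o R)
  and identity (id,id) (equality of multipliers means equality on T).\<close>
definition unit_multiplier :: "('a \<Rightarrow> 'a \<Rightarrow> 'a) \<Rightarrow> 'a set \<Rightarrow> ('a \<Rightarrow> 'a) \<times> ('a \<Rightarrow> 'a) \<Rightarrow> bool" where
  "unit_multiplier mul T m \<longleftrightarrow> multiplier mul T m \<and>
     (\<exists>m'. multiplier mul T m' \<and>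
        (\<forall>s\<in>T. fst m (fst m' s) = s \<and> snd m' (snd m s) = s \<and>
                fst m' (fst m s) = s \<and> snd m (snd m' s) = s))"

definition mult_inv :: "'a set \<Rightarrow> ('a \<Rightarrow> 'a) \<times> ('a \<Rightarrow> 'a) \<Rightarrow> ('a \<Rightarrow> 'a) \<times> ('a \<Rightarrow> 'a)" where
  "mult_inv T m = (inv_into T (fst m), inv_into T (snd m))"

definition twisted_partial_action ::
  "('g, 'c) monoid_scheme \<Rightarrow> 'a set \<Rightarrow> ('a \<Rightarrow> 'a \<Rightarrow> 'a) \<Rightarrow>
   ('g \<Rightarrow> 'a set) \<Rightarrow> ('g \<Rightarrow> 'a \<Rightarrow> 'a) \<Rightarrow> ('g \<Rightarrow> 'g \<Rightarrow> ('a \<Rightarrow> 'a) \<times> ('a \<Rightarrow> 'a)) \<Rightarrow> bool" where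
  "twisted_partial_action G S mul D \<theta> w \<longleftrightarrow>
     \<comment> \<open>ideals and isomorphisms\<close>
     (\<forall>x\<in>carrier G. sg_ideal S mul (D x) \<and> sg_iso mul (\<theta> x) (D (inv\<^bsub>G\<^esub> x)) (D x)) \<and>
     \<comment> \<open>w x y is a unit multiplier of D_x D_{xy}\<close>
     (\<forall>x\<in>carrier G. \<forall>y\<in>carrier G.
        unit_multiplier mul (setmul mul (D x) (D (x \<otimes>\<^bsub>G\<^esub> y))) (w x y)) \<and>
     \<comment> \<open>(i)\<close>
     (\<forall>x\<in>carrier G. setmul mul (D x) (D x) = D x) \<and>
     (\<forall>x\<in>carrier G. \<forall>y\<in>carrier G. setmul mul (D x) (D y) = setmul mul (D y) (D x)) \<and>
     \<comment> \<open>(ii)\<close>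
     D \<one>\<^bsub>G\<^esub> = S \<and> (\<forall>s\<in>S. \<theta> \<one>\<^bsub>G\<^esub> s = s) \<and>
     \<comment> \<open>(iii)\<close>
     (\<forall>x\<in>carrier G. \<forall>y\<in>carrier G.
        \<theta> x ` setmul mul (D (inv\<^bsub>G\<^esub> x)) (D y) = setmul mul (D x) (D (x \<otimes>\<^bsub>G\<^esub> y))) \<and>
     \<comment> \<open>(iv): theta_x(theta_y(s)) = (w_{x,y} theta_{xy}(s)) w_{x,y}^{-1}\<close>
     (\<forall>x\<in>carrier G. \<forall>y\<in>carrier G.
        \<forall>s\<in>setmul mul (D (inv\<^bsub>G\<^esub> y)) (D (inv\<^bsub>G\<^esub> y \<otimes>\<^bsub>G\<^esub> inv\<^bsub>G\<^esub> x)).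
          \<theta> x (\<theta> y s) =
            snd (mult_inv (setmul mul (D x) (D (x \<otimes>\<^bsub>G\<^esub> y))) (w x y))
              (fst (w x y) (\<theta> (x \<otimes>\<^bsub>G\<^esub> y) s))) \<and>
     \<comment> \<open>(v): w_{1,x} = w_{x,1} = identity multiplier of D_x\<close>
     (\<forall>x\<in>carrier G. \<forall>s\<in>D x.
        fst (w \<one>\<^bsub>G\<^esub> x) s = s \<and> snd (w \<one>\<^bsub>G\<^esub> x) s = s \<and>
        fst (w x \<one>\<^bsub>G\<^esub>) s = s \<and> snd (w x \<one>\<^bsub>G\<^esub>) s = s) \<and>
     \<comment> \<open>(vi): theta_x(s w_{y,z}) w_{x,yz} = theta_x(s) w_{x,y} w_{xy,z}\<close>
     (\<forall>x\<in>carrier G. \<forall>y\<in>carrier G. \<forall>z\<in>carrier G.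
        \<forall>s\<in>setmul mul (setmul mul (D (inv\<^bsub>G\<^esub> x)) (D y)) (D (y \<otimes>\<^bsub>G\<^esub> z)).
          snd (w x (y \<otimes>\<^bsub>G\<^esub> z)) (\<theta> x (snd (w y z) s)) =
          snd (w (x \<otimes>\<^bsub>G\<^esub> y) z) (snd (w x y) (\<theta> x s)))"

text \<open>Elements s\<delta>_x are represented as pairs (s, x) with x in G and s in D_x.\<close>
definition crossed_product ::
  "('g, 'c) monoid_scheme \<Rightarrow> ('g \<Rightarrow> 'a set) \<Rightarrow> ('a \<times> 'g) set" where
  "crossed_product G D = {(s, x). x \<in> carrier G \<and> s \<in> D x}"

definition cp_mult ::
  "('g, 'c) monoid_scheme \<Rightarrow> ('a \<Rightarrow> 'a \<Rightarrow> 'a) \<Rightarrow> ('g \<Rightarrow> 'a set) \<Rightarrow> ('g \<Rightarrow> 'a \<Rightarrow> 'a) \<Rightarrow>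
   ('g \<Rightarrow> 'g \<Rightarrow> ('a \<Rightarrow> 'a) \<times> ('a \<Rightarrow> 'a)) \<Rightarrow> 'a \<times> 'g \<Rightarrow> 'a \<times> 'g \<Rightarrow> 'a \<times> 'g" where
  "cp_mult G mul D \<theta> w p q =
     (case p of (s, x) \<Rightarrow> case q of (t, y) \<Rightarrow>
       (snd (w x y) (\<theta> x (mul (inv_into (D (inv\<^bsub>G\<^esub> x)) (\<theta> x) s) t)), x \<otimes>\<^bsub>G\<^esub> y))"

end

theory Submission
  imports Defs
begin


locale invsg =
  fixes S :: "'a set" and mul :: "'a \<Rightarrow> 'a \<Rightarrow> 'a" (infixl "\<cdot>" 70)
  assumes isg: "inverse_semigroup_on S mul"
begin

lemma closed[simp, intro]: "a \<in> S \<Longrightarrow> b \<in> S \<Longrightarrow> a \<cdot> b \<in> S"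
  using isg unfolding inverse_semigroup_on_def semigroup_on_def by blast

lemma assoc: "a \<in> S \<Longrightarrow> b \<in> S \<Longrightarrow> c \<in> S \<Longrightarrow> a \<cdot> b \<cdot> c = a \<cdot> (b \<cdot> c)"
  using isg unfolding inverse_semigroup_on_def semigroup_on_def by blast

abbreviation iv where "iv \<equiv> sg_inv S mul"

lemma iv_props: assumes "a \<in> S"
  shows "iv a \<in> S" "a \<cdot> iv a \<cdot> a = a" "iv a \<cdot> a \<cdot> iv a = iv a"
proof -
  have ex: "\<exists>!b. b \<in> S \<and> a \<cdot> b \<cdot> a = a \<and> b \<cdot> a \<cdot> b = b"
    using isg assms unfolding inverse_semigroup_on_def by blast
  have "iv a \<in> S \<and> a \<cdot> iv a \<cdot> a = a \<and> iv a \<cdot> a \<cdot> iv a = iv a"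
    unfolding sg_inv_def by (rule theI'[OF ex])
  then show "iv a \<in> S" "a \<cdot> iv a \<cdot> a = a" "iv a \<cdot> a \<cdot> iv a = iv a" by auto
qed

lemma iv_in[simp, intro]: "a \<in> S \<Longrightarrow> iv a \<in> S" using iv_props by blast

lemma iv_unique: assumes "a \<in> S" "b \<in> S" "a \<cdot> b \<cdot> a = a" "b \<cdot> a \<cdot> b = b"
  shows "iv a = b"
proof -
  have ex: "\<exists>!b. b \<in> S \<and> a \<cdot> b \<cdot> a = a \<and> b \<cdot> a \<cdot> b = b"
    using isg assms unfolding inverse_semigroup_on_def by blast
  show ?thesis unfolding sg_inv_def
    by (rule the1_equality[OF ex]) (use assms in auto)
qed

lemma aia: "a \<in> S \<Longrightarrow> a \<cdot> (iv a \<cdot> a) = a"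
  using iv_props assoc by metis
lemma iai: "a \<in> S \<Longrightarrow> iv a \<cdot> (a \<cdot> iv a) = iv a"
  using iv_props assoc by metis

lemma idem_ext: "e \<in> S \<Longrightarrow> z \<in> S \<Longrightarrow> e \<cdot> e = e \<Longrightarrow> e \<cdot> (e \<cdot> z) = e \<cdot> z"
  by (metis assoc)

lemma idem_comm: assumes S: "e \<in> S" "f \<in> S" and ee: "e \<cdot> e = e" and ff: "f \<cdot> f = f"
  shows "e \<cdot> f = f \<cdot> e"
proof -
  have g: "\<And>a b. a \<in> S \<Longrightarrow> b \<in> S \<Longrightarrow> a \<cdot> a = a \<Longrightarrow> b \<cdot> b = b \<Longrightarrow> (a \<cdot> b) \<cdot> (a \<cdot> b) = a \<cdot> b"
  proof -
    fix a b assume ab: "a \<in> S" "b \<in> S" "a \<cdot> a = a" "b \<cdot> b = b"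
    define x where "x = iv (a \<cdot> b)"
    have xS: "x \<in> S" using ab x_def by auto
    have h1: "a \<cdot> (b \<cdot> (x \<cdot> (a \<cdot> b))) = a \<cdot> b"
      using iv_props(2)[of "a \<cdot> b"] ab x_def by (simp add: assoc)
    have h2: "x \<cdot> (a \<cdot> (b \<cdot> x)) = x"
      using iv_props(3)[of "a \<cdot> b"] ab x_def by (simp add: assoc)
    have h2': "\<And>z. z \<in> S \<Longrightarrow> x \<cdot> (a \<cdot> (b \<cdot> (x \<cdot> z))) = x \<cdot> z"
    proof -
      fix z assume "z \<in> S"
      then have "x \<cdot> (a \<cdot> (b \<cdot> (x \<cdot> z))) = (x \<cdot> (a \<cdot> (b \<cdot> x))) \<cdot> z" using ab xS by (simp add: assoc)
      then show "x \<cdot> (a \<cdot> (b \<cdot> (x \<cdot> z))) = x \<cdot> z" using h2 by simp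
    qed
    have aa: "\<And>z. z \<in> S \<Longrightarrow> a \<cdot> (a \<cdot> z) = a \<cdot> z" using ab idem_ext by blast
    have bb: "\<And>z. z \<in> S \<Longrightarrow> b \<cdot> (b \<cdot> z) = b \<cdot> z" using ab idem_ext by blast
    have "iv (a \<cdot> b) = b \<cdot> x \<cdot> a"
    proof (rule iv_unique)
      show "a \<cdot> b \<cdot> (b \<cdot> x \<cdot> a) \<cdot> (a \<cdot> b) = a \<cdot> b"
        using ab xS by (simp add: assoc aa bb h1)
      show "b \<cdot> x \<cdot> a \<cdot> (a \<cdot> b) \<cdot> (b \<cdot> x \<cdot> a) = b \<cdot> x \<cdot> a"
        using ab xS by (simp add: assoc aa bb h2')
    qed (use ab xS in auto)
    hence xe: "x = b \<cdot> (x \<cdot> a)" using x_def ab xS by (simp add: assoc)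
    have xx: "x \<cdot> x = x"
    proof -
      have "x \<cdot> x = b \<cdot> (x \<cdot> (a \<cdot> (b \<cdot> (x \<cdot> a))))" 
        using xe ab xS by (metis assoc closed)
      also have "\<dots> = b \<cdot> ((x \<cdot> (a \<cdot> (b \<cdot> x))) \<cdot> a)" using ab xS by (simp add: assoc)
      also have "\<dots> = b \<cdot> (x \<cdot> a)" using h2 by simp
      finally show ?thesis using xe by simp
    qed
    have "iv x = a \<cdot> b" using iv_unique[of x "a \<cdot> b"] ab xS x_def iv_props by auto
    moreover have "iv x = x" using iv_unique[of x x] xS xx by auto
    ultimately have "x = a \<cdot> b" by simp
    then show "(a \<cdot> b) \<cdot> (a \<cdot> b) = a \<cdot> b" using xx by simp
  qed
  have efe: "(e \<cdot> f) \<cdot> (e \<cdot> f) = e \<cdot> f" and fef: "(f \<cdot> e) \<cdot> (f \<cdot> e) = f \<cdot> e" using g S ee ff by auto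
  have "iv (e \<cdot> f) = f \<cdot> e"
  proof (rule iv_unique)
    show "e \<cdot> f \<cdot> (f \<cdot> e) \<cdot> (e \<cdot> f) = e \<cdot> f"
      using S ee ff efe by (metis assoc closed)
    show "f \<cdot> e \<cdot> (e \<cdot> f) \<cdot> (f \<cdot> e) = f \<cdot> e"
      using S ee ff fef by (metis assoc closed)
  qed (use S in auto)
  moreover have "iv (e \<cdot> f) = e \<cdot> f" using iv_unique[of "e \<cdot> f" "e \<cdot> f"] S efe by auto
  ultimately show ?thesis by simp
qed


lemma idem_iv: "e \<in> S \<Longrightarrow> e \<cdot> e = e \<Longrightarrow> iv e = e"
  using iv_unique[of e e] by simp

lemma iv_iv: "a \<in> S \<Longrightarrow> iv (iv a) = a"
  using iv_unique[of "iv a" a] iv_props by auto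

lemma idem1: "a \<in> S \<Longrightarrow> (a \<cdot> iv a) \<cdot> (a \<cdot> iv a) = a \<cdot> iv a"
  by (metis assoc closed iv_in iv_props(2))
lemma idem2: "a \<in> S \<Longrightarrow> (iv a \<cdot> a) \<cdot> (iv a \<cdot> a) = iv a \<cdot> a"
  by (metis assoc closed iv_in iv_props(3))

lemma iv_mul: assumes "a \<in> S" "b \<in> S" shows "iv (a \<cdot> b) = iv b \<cdot> iv a"
proof (rule iv_unique)
  have c: "(b \<cdot> iv b) \<cdot> (iv a \<cdot> a) = (iv a \<cdot> a) \<cdot> (b \<cdot> iv b)"
    using idem_comm idem1 idem2 assms by auto
  have "a \<cdot> b \<cdot> (iv b \<cdot> iv a) \<cdot> (a \<cdot> b) = a \<cdot> ((b \<cdot> iv b) \<cdot> (iv a \<cdot> a)) \<cdot> b"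
    using assms by (simp add: assoc)
  also have "\<dots> = (a \<cdot> iv a \<cdot> a) \<cdot> (b \<cdot> iv b \<cdot> b)" using assms c by (simp add: assoc)
  also have "\<dots> = a \<cdot> b" using iv_props assms by simp
  finally show "a \<cdot> b \<cdot> (iv b \<cdot> iv a) \<cdot> (a \<cdot> b) = a \<cdot> b" .
  have "iv b \<cdot> iv a \<cdot> (a \<cdot> b) \<cdot> (iv b \<cdot> iv a) = iv b \<cdot> ((iv a \<cdot> a) \<cdot> (b \<cdot> iv b)) \<cdot> iv a"
    using assms by (simp add: assoc)
  also have "\<dots> = iv b \<cdot> ((b \<cdot> iv b) \<cdot> (iv a \<cdot> a)) \<cdot> iv a" by (simp only: c)
  also have "\<dots> = (iv b \<cdot> b \<cdot> iv b) \<cdot> (iv a \<cdot> a \<cdot> iv a)" using assms by (simp add: assoc)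
  also have "\<dots> = iv b \<cdot> iv a" using iv_props assms by simp
  finally show "iv b \<cdot> iv a \<cdot> (a \<cdot> b) \<cdot> (iv b \<cdot> iv a) = iv b \<cdot> iv a" .
qed (use assms in auto)

lemma cancel_eq: assumes "m \<in> S" "m' \<in> S" "(m \<cdot> iv m) \<cdot> m' = m" "(m' \<cdot> iv m') \<cdot> m = m'"
  shows "m = m'"
proof -
  let ?e = "m \<cdot> iv m" and ?f = "m' \<cdot> iv m'"
  have em: "?e \<cdot> m = m" using assms iv_props by simp
  have "m = ?e \<cdot> (?f \<cdot> m)" using assms by simp
  also have "\<dots> = (?e \<cdot> ?f) \<cdot> m" using assms by (simp add: assoc)
  also have "\<dots> = (?f \<cdot> ?e) \<cdot> m" using idem_comm idem1 assms by (metis closed iv_in)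
  also have "\<dots> = ?f \<cdot> m" using assms em by (simp add: assoc)
  also have "\<dots> = m'" using assms by simp
  finally show ?thesis .
qed

lemma ideal_sub: "sg_ideal S mul I \<Longrightarrow> I \<subseteq> S" unfolding sg_ideal_def by blast
lemma ideal_L: "sg_ideal S mul I \<Longrightarrow> s \<in> S \<Longrightarrow> a \<in> I \<Longrightarrow> s \<cdot> a \<in> I" unfolding sg_ideal_def by blast
lemma ideal_R: "sg_ideal S mul I \<Longrightarrow> s \<in> S \<Longrightarrow> a \<in> I \<Longrightarrow> a \<cdot> s \<in> I" unfolding sg_ideal_def by blast
lemma ideal_iv: assumes "sg_ideal S mul I" "a \<in> I" shows "iv a \<in> I"
proof -
  have aS: "a \<in> S" using assms ideal_sub by blast
  have "iv a \<cdot> (a \<cdot> iv a) \<in> I" using assms aS ideal_L ideal_R by auto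
  then show ?thesis using iai aS by simp
qed

lemma setmul_ideal: assumes "sg_ideal S mul I" "sg_ideal S mul J" shows "setmul mul I J = I \<inter> J"
proof
  show "setmul mul I J \<subseteq> I \<inter> J" unfolding setmul_def using assms ideal_sub ideal_L ideal_R by blast
  show "I \<inter> J \<subseteq> setmul mul I J"
  proof
    fix a assume a: "a \<in> I \<inter> J"
    have aS: "a \<in> S" using a assms ideal_sub by blast
    have "a \<cdot> iv a \<in> I" using a assms ideal_R aS by auto
    moreover have "a = (a \<cdot> iv a) \<cdot> a" using iv_props aS by simp
    ultimately show "a \<in> setmul mul I J" unfolding setmul_def using a by blast
  qed
qed

lemma ideal_int: "sg_ideal S mul I \<Longrightarrow> sg_ideal S mul J \<Longrightarrow> I \<inter> J \<noteq> {} \<Longrightarrow> sg_ideal S mul (I \<inter> J)"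
  unfolding sg_ideal_def by blast

context
  fixes T m
  assumes T: "T \<subseteq> S" "\<And>a s. s \<in> S \<Longrightarrow> a \<in> T \<Longrightarrow> s \<cdot> a \<in> T \<and> a \<cdot> s \<in> T"
    and um: "unit_multiplier mul T m"
begin

lemma mu: "multiplier mul T m" using um unfolding unit_multiplier_def by blast

lemma L_mem: "q \<in> T \<Longrightarrow> fst m q \<in> T" using mu unfolding multiplier_def by blast
lemma R_mem: "q \<in> T \<Longrightarrow> snd m q \<in> T" using mu unfolding multiplier_def by blast
lemma L_mul: "q \<in> T \<Longrightarrow> p \<in> T \<Longrightarrow> fst m (q \<cdot> p) = fst m q \<cdot> p" using mu unfolding multiplier_def by blast
lemma R_mul: "q \<in> T \<Longrightarrow> p \<in> T \<Longrightarrow> snd m (q \<cdot> p) = q \<cdot> snd m p" using mu unfolding multiplier_def by blast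
lemma LR_mid: "q \<in> T \<Longrightarrow> p \<in> T \<Longrightarrow> q \<cdot> fst m p = snd m q \<cdot> p" using mu unfolding multiplier_def by blast

lemma m'_ex: "\<exists>m'. multiplier mul T m' \<and>
        (\<forall>s\<in>T. fst m (fst m' s) = s \<and> snd m' (snd m s) = s \<and>
                fst m' (fst m s) = s \<and> snd m (snd m' s) = s)"
  using um unfolding unit_multiplier_def by blast

lemma L_inj: "q \<in> T \<Longrightarrow> p \<in> T \<Longrightarrow> fst m q = fst m p \<Longrightarrow> q = p"
  using m'_ex by metis
lemma R_inj: "q \<in> T \<Longrightarrow> p \<in> T \<Longrightarrow> snd m q = snd m p \<Longrightarrow> q = p"
  using m'_ex by metis

lemma L_inv: "q \<in> T \<Longrightarrow> inv_into T (fst m) q \<in> T \<and> fst m (inv_into T (fst m) q) = q"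
proof -
  assume q: "q \<in> T"
  obtain m' where m': "multiplier mul T m'" "\<forall>s\<in>T. fst m (fst m' s) = s"
    using m'_ex by blast
  have "fst m' q \<in> T" using m' q unfolding multiplier_def by blast
  then have "q \<in> fst m ` T" using m' q by force
  then show ?thesis by (simp add: inv_into_into f_inv_into_f)
qed
lemma R_inv: "q \<in> T \<Longrightarrow> inv_into T (snd m) q \<in> T \<and> snd m (inv_into T (snd m) q) = q"
proof -
  assume q: "q \<in> T"
  obtain m' where m': "multiplier mul T m'" "\<forall>s\<in>T. snd m (snd m' s) = s"
    using m'_ex by blast
  have "snd m' q \<in> T" using m' q unfolding multiplier_def by blast
  then have "q \<in> snd m ` T" using m' q by force
  then show ?thesis by (simp add: inv_into_into f_inv_into_f)
qed

lemma TS: "q \<in> T \<Longrightarrow> q \<in> S" using T by blast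

lemma R_ext: assumes "a \<in> S" "q \<in> T" shows "a \<cdot> snd m q = snd m (a \<cdot> q)"
proof -
  have qS: "q \<in> S" using assms TS by blast
  have e: "q \<cdot> iv q \<in> T" using T assms qS by blast
  have "snd m q = (q \<cdot> iv q) \<cdot> snd m q" using R_mul[OF e assms(2)] iv_props qS by simp
  hence "a \<cdot> snd m q = (a \<cdot> (q \<cdot> iv q)) \<cdot> snd m q"
    using assms qS R_mem TS by (metis assoc closed iv_in)
  also have "\<dots> = snd m ((a \<cdot> (q \<cdot> iv q)) \<cdot> q)"
    using R_mul[of "a \<cdot> (q \<cdot> iv q)" q] e T assms by auto
  also have "(a \<cdot> (q \<cdot> iv q)) \<cdot> q = a \<cdot> q" using assms qS iv_props by (simp add: assoc)
  finally show ?thesis .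
qed

lemma L_ext: assumes "a \<in> S" "q \<in> T" shows "fst m q \<cdot> a = fst m (q \<cdot> a)"
proof -
  have qS: "q \<in> S" using assms TS by blast
  have e: "iv q \<cdot> q \<in> T" using T assms qS by blast
  have "fst m q = fst m q \<cdot> (iv q \<cdot> q)" using L_mul[OF assms(2) e] iv_props qS by (simp add: assoc)
  hence "fst m q \<cdot> a = fst m q \<cdot> ((iv q \<cdot> q) \<cdot> a)"
    using assms qS L_mem TS by (metis assoc closed iv_in)
  also have "\<dots> = fst m (q \<cdot> ((iv q \<cdot> q) \<cdot> a))"
    using L_mul[of q "(iv q \<cdot> q) \<cdot> a"] e T assms by auto
  also have "q \<cdot> ((iv q \<cdot> q) \<cdot> a) = q \<cdot> a" using assms qS iv_props by (simp flip: assoc)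
  finally show ?thesis .
qed

lemma LR_comm: assumes "c \<in> T" shows "fst m (snd m c) = snd m (fst m c)"
proof -
  have key: "\<And>q. q \<in> T \<Longrightarrow> q \<cdot> fst m (snd m c) = q \<cdot> snd m (fst m c)"
  proof -
    fix q assume q: "q \<in> T"
    have "q \<cdot> fst m (snd m c) = snd m q \<cdot> snd m c" using LR_mid q R_mem assms by blast
    moreover have "q \<cdot> snd m (fst m c) = snd m (q \<cdot> fst m c)" using R_mul q L_mem assms by simp
    moreover have "q \<cdot> fst m c = snd m q \<cdot> c" using LR_mid q assms by blast
    moreover have "snd m (snd m q \<cdot> c) = snd m q \<cdot> snd m c" using R_mul R_mem q assms by blast
    ultimately show "q \<cdot> fst m (snd m c) = q \<cdot> snd m (fst m c)" by simp
  qed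
  let ?a = "fst m (snd m c)" and ?b = "snd m (fst m c)"
  have aT: "?a \<in> T" and bT: "?b \<in> T" using assms L_mem R_mem by auto
  show ?thesis
  proof (rule cancel_eq)
    show "?a \<in> S" "?b \<in> S" using aT bT TS by auto
    have "?a \<cdot> iv ?a \<in> T" "?b \<cdot> iv ?b \<in> T" using aT bT T TS by auto
    then show "?a \<cdot> iv ?a \<cdot> ?b = ?a" "?b \<cdot> iv ?b \<cdot> ?a = ?b"
      using key[of "?a \<cdot> iv ?a"] key[of "?b \<cdot> iv ?b"] iv_props aT bT TS by auto
  qed
qed

lemma L_idem: assumes "q \<in> T" shows "iv (fst m q) \<cdot> fst m q = iv q \<cdot> q"
proof -
  obtain m' where m': "multiplier mul T m'" "\<forall>s\<in>T. fst m' (fst m s) = s"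
    using m'_ex by blast
  have qS: "q \<in> S" using assms TS by blast
  have LT: "fst m q \<in> T" using L_mem assms by blast
  hence LS: "fst m q \<in> S" using TS by blast
  let ?e = "iv q \<cdot> q" and ?f = "iv (fst m q) \<cdot> fst m q"
  have eT: "?e \<in> T" and fT: "?f \<in> T" using T assms LT qS LS by auto
  have "fst m q = fst m (q \<cdot> ?e)" using qS by (simp add: aia)
  also have "\<dots> = fst m q \<cdot> ?e" using L_mul assms eT by blast
  finally have L1: "fst m q = fst m q \<cdot> ?e" .
  have "q = fst m' (fst m q)" using m' assms by simp
  also have "\<dots> = fst m' (fst m q \<cdot> ?f)" using LS by (simp add: aia)
  also have "\<dots> = fst m' (fst m q) \<cdot> ?f" using m'(1) LT fT unfolding multiplier_def by blast
  also have "\<dots> = q \<cdot> ?f" using m' assms by simp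
  finally have q1: "q = q \<cdot> ?f" .
  have "?f = ?f \<cdot> ?e"
    using L1 LS qS by (metis assoc closed iv_in)
  moreover have "?e = ?e \<cdot> ?f" using q1 LS qS by (metis assoc closed iv_in)
  moreover have "?e \<cdot> ?f = ?f \<cdot> ?e" using idem_comm idem2 LS qS by (metis closed iv_in)
  ultimately show ?thesis by simp
qed

end

end



locale tpa = invsg S mul for S and mul (infixl "\<cdot>" 70) +
  fixes G :: "('g,'c) monoid_scheme" and D :: "'g \<Rightarrow> 'a set" and \<theta> :: "'g \<Rightarrow> 'a \<Rightarrow> 'a"
    and w :: "'g \<Rightarrow> 'g \<Rightarrow> ('a \<Rightarrow> 'a) \<times> ('a \<Rightarrow> 'a)"
  assumes grp: "group G" and tp: "twisted_partial_action G S mul D \<theta> w"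

sublocale tpa \<subseteq> G: group G by (rule grp)

context tpa
begin

abbreviation gi where "gi x \<equiv> inv\<^bsub>G\<^esub> x"
abbreviation gm (infixl "\<diamond>" 75) where "x \<diamond> y \<equiv> x \<otimes>\<^bsub>G\<^esub> y"
abbreviation T where "T x y \<equiv> D x \<inter> D (x \<diamond> y)"
abbreviation L where "L x y \<equiv> fst (w x y)"
abbreviation R where "R x y \<equiv> snd (w x y)"
abbreviation thi where "thi x \<equiv> inv_into (D (gi x)) (\<theta> x)"
abbreviation CG where "CG \<equiv> carrier G"

lemma D_ideal: "x \<in> CG \<Longrightarrow> sg_ideal S mul (D x)"
  using tp unfolding twisted_partial_action_def by blast
lemma th_iso: "x \<in> CG \<Longrightarrow> sg_iso mul (\<theta> x) (D (gi x)) (D x)"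
  using tp unfolding twisted_partial_action_def by blast
lemma Dsub: "x \<in> CG \<Longrightarrow> a \<in> D x \<Longrightarrow> a \<in> S" using D_ideal ideal_sub by blast
lemma DL: "x \<in> CG \<Longrightarrow> s \<in> S \<Longrightarrow> a \<in> D x \<Longrightarrow> s \<cdot> a \<in> D x" using D_ideal ideal_L by blast
lemma DR: "x \<in> CG \<Longrightarrow> s \<in> S \<Longrightarrow> a \<in> D x \<Longrightarrow> a \<cdot> s \<in> D x" using D_ideal ideal_R by blast
lemma Div: "x \<in> CG \<Longrightarrow> a \<in> D x \<Longrightarrow> iv a \<in> D x" using D_ideal ideal_iv by blast
lemma setmulD: "x \<in> CG \<Longrightarrow> y \<in> CG \<Longrightarrow> setmul mul (D x) (D y) = D x \<inter> D y"
  using D_ideal setmul_ideal by blast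

lemma D1: "D \<one>\<^bsub>G\<^esub> = S" using tp unfolding twisted_partial_action_def by blast
lemma th1: "s \<in> S \<Longrightarrow> \<theta> \<one>\<^bsub>G\<^esub> s = s" using tp unfolding twisted_partial_action_def by blast

lemma w_um: "x \<in> CG \<Longrightarrow> y \<in> CG \<Longrightarrow> unit_multiplier mul (T x y) (w x y)"
  using tp setmulD unfolding twisted_partial_action_def by (metis G.m_closed)

lemma Tsub: "x \<in> CG \<Longrightarrow> y \<in> CG \<Longrightarrow> T x y \<subseteq> S" using Dsub by blast
lemma Tid: "x \<in> CG \<Longrightarrow> y \<in> CG \<Longrightarrow> s \<in> S \<Longrightarrow> a \<in> T x y \<Longrightarrow> s \<cdot> a \<in> T x y \<and> a \<cdot> s \<in> T x y"
  using DL DR by (meson G.m_closed IntD1 IntD2 IntI)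

lemmas WC = Tsub Tid w_um

lemma WL_mem: "x \<in> CG \<Longrightarrow> y \<in> CG \<Longrightarrow> q \<in> T x y \<Longrightarrow> L x y q \<in> T x y"
  by (rule L_mem[OF WC]) 
lemma WR_mem: "x \<in> CG \<Longrightarrow> y \<in> CG \<Longrightarrow> q \<in> T x y \<Longrightarrow> R x y q \<in> T x y"
  by (rule R_mem[OF WC])
lemma WL_mul: "x \<in> CG \<Longrightarrow> y \<in> CG \<Longrightarrow> q \<in> T x y \<Longrightarrow> p \<in> T x y \<Longrightarrow> L x y (q \<cdot> p) = L x y q \<cdot> p"
  by (rule L_mul[OF WC])
lemma WR_mul: "x \<in> CG \<Longrightarrow> y \<in> CG \<Longrightarrow> q \<in> T x y \<Longrightarrow> p \<in> T x y \<Longrightarrow> R x y (q \<cdot> p) = q \<cdot> R x y p"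
  by (rule R_mul[OF WC])
lemma WLR_mid: "x \<in> CG \<Longrightarrow> y \<in> CG \<Longrightarrow> q \<in> T x y \<Longrightarrow> p \<in> T x y \<Longrightarrow> q \<cdot> L x y p = R x y q \<cdot> p"
  by (rule LR_mid[OF WC])
lemma WL_inj: "x \<in> CG \<Longrightarrow> y \<in> CG \<Longrightarrow> q \<in> T x y \<Longrightarrow> p \<in> T x y \<Longrightarrow> L x y q = L x y p \<Longrightarrow> q = p"
  by (rule L_inj[OF WC])
lemma WR_inj: "x \<in> CG \<Longrightarrow> y \<in> CG \<Longrightarrow> q \<in> T x y \<Longrightarrow> p \<in> T x y \<Longrightarrow> R x y q = R x y p \<Longrightarrow> q = p"
  by (rule R_inj[OF WC])
lemma WL_inv: "x \<in> CG \<Longrightarrow> y \<in> CG \<Longrightarrow> q \<in> T x y \<Longrightarrow> inv_into (T x y) (L x y) q \<in> T x y \<and> L x y (inv_into (T x y) (L x y) q) = q"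
  by (rule L_inv[OF WC])
lemma WR_inv: "x \<in> CG \<Longrightarrow> y \<in> CG \<Longrightarrow> q \<in> T x y \<Longrightarrow> inv_into (T x y) (R x y) q \<in> T x y \<and> R x y (inv_into (T x y) (R x y) q) = q"
  by (rule R_inv[OF WC])
lemma WR_ext: "x \<in> CG \<Longrightarrow> y \<in> CG \<Longrightarrow> a \<in> S \<Longrightarrow> q \<in> T x y \<Longrightarrow> a \<cdot> R x y q = R x y (a \<cdot> q)"
  by (rule R_ext[OF WC])
lemma WL_ext: "x \<in> CG \<Longrightarrow> y \<in> CG \<Longrightarrow> a \<in> S \<Longrightarrow> q \<in> T x y \<Longrightarrow> L x y q \<cdot> a = L x y (q \<cdot> a)"
  by (rule L_ext[OF WC])
lemma WLR_comm: "x \<in> CG \<Longrightarrow> y \<in> CG \<Longrightarrow> q \<in> T x y \<Longrightarrow> L x y (R x y q) = R x y (L x y q)"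
  by (rule LR_comm[OF WC])
lemma WL_idem: "x \<in> CG \<Longrightarrow> y \<in> CG \<Longrightarrow> q \<in> T x y \<Longrightarrow> iv (L x y q) \<cdot> L x y q = iv q \<cdot> q"
  by (rule L_idem[OF WC])

lemma th_mem: "x \<in> CG \<Longrightarrow> a \<in> D (gi x) \<Longrightarrow> \<theta> x a \<in> D x"
  using th_iso unfolding sg_iso_def bij_betw_def by blast
lemma th_mul: "x \<in> CG \<Longrightarrow> a \<in> D (gi x) \<Longrightarrow> b \<in> D (gi x) \<Longrightarrow> \<theta> x (a \<cdot> b) = \<theta> x a \<cdot> \<theta> x b"
  using th_iso unfolding sg_iso_def by blast
lemma th_inj: "x \<in> CG \<Longrightarrow> a \<in> D (gi x) \<Longrightarrow> b \<in> D (gi x) \<Longrightarrow> \<theta> x a = \<theta> x b \<Longrightarrow> a = b"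
  using th_iso unfolding sg_iso_def bij_betw_def inj_on_def by blast
lemma th_bij: "x \<in> CG \<Longrightarrow> bij_betw (\<theta> x) (D (gi x)) (D x)"
  using th_iso unfolding sg_iso_def by blast
lemma thi_mem: "x \<in> CG \<Longrightarrow> s \<in> D x \<Longrightarrow> thi x s \<in> D (gi x)"
  using th_bij by (metis bij_betw_imp_surj_on inv_into_into)
lemma th_thi: "x \<in> CG \<Longrightarrow> s \<in> D x \<Longrightarrow> \<theta> x (thi x s) = s"
  using th_bij by (metis bij_betw_imp_surj_on f_inv_into_f)
lemma thi_th: "x \<in> CG \<Longrightarrow> a \<in> D (gi x) \<Longrightarrow> thi x (\<theta> x a) = a"
  using th_bij by (metis bij_betw_imp_inj_on inv_into_f_f)

lemma tp_iii: "x \<in> CG \<Longrightarrow> y \<in> CG \<Longrightarrow> \<theta> x ` (D (gi x) \<inter> D y) = D x \<inter> D (x \<diamond> y)"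
  using tp setmulD unfolding twisted_partial_action_def by (metis G.inv_closed G.m_closed)

lemma th3: "x \<in> CG \<Longrightarrow> y \<in> CG \<Longrightarrow> a \<in> D (gi x) \<Longrightarrow> a \<in> D y \<Longrightarrow> \<theta> x a \<in> D (x \<diamond> y)"
  using tp_iii by blast
lemma thi3: "x \<in> CG \<Longrightarrow> y \<in> CG \<Longrightarrow> s \<in> D x \<Longrightarrow> s \<in> D (x \<diamond> y) \<Longrightarrow> thi x s \<in> D y"
proof -
  assume a: "x \<in> CG" "y \<in> CG" "s \<in> D x" "s \<in> D (x \<diamond> y)"
  then obtain b where b: "b \<in> D (gi x) \<inter> D y" "s = \<theta> x b" using tp_iii by (metis IntI imageE)
  then show ?thesis using thi_th a by simp
qed

lemma th_iv: assumes "x \<in> CG" "a \<in> D (gi x)" shows "\<theta> x (iv a) = iv (\<theta> x a)"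
proof -
  have x': "gi x \<in> CG" using assms by simp
  have aS: "a \<in> S" using Dsub x' assms by blast
  have ia: "iv a \<in> D (gi x)" using Div x' assms by blast
  show ?thesis
  proof (rule iv_unique[symmetric])
    show "\<theta> x a \<in> S" "\<theta> x (iv a) \<in> S" using th_mem Dsub assms ia by blast+
    have aia': "a \<cdot> iv a \<in> D (gi x)" "iv a \<cdot> a \<in> D (gi x)" using DR x' assms aS ia by auto
    have "\<theta> x a \<cdot> \<theta> x (iv a) \<cdot> \<theta> x a = \<theta> x (a \<cdot> iv a) \<cdot> \<theta> x a" using th_mul assms ia by simp
    also have "\<dots> = \<theta> x (a \<cdot> iv a \<cdot> a)" using th_mul assms aia' by simp
    finally show "\<theta> x a \<cdot> \<theta> x (iv a) \<cdot> \<theta> x a = \<theta> x a" using iv_props aS by simp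
    have "\<theta> x (iv a) \<cdot> \<theta> x a \<cdot> \<theta> x (iv a) = \<theta> x (iv a \<cdot> a) \<cdot> \<theta> x (iv a)" using th_mul assms ia by simp
    also have "\<dots> = \<theta> x (iv a \<cdot> a \<cdot> iv a)" using th_mul assms aia' ia by simp
    finally show "\<theta> x (iv a) \<cdot> \<theta> x a \<cdot> \<theta> x (iv a) = \<theta> x (iv a)" using iv_props aS by simp
  qed
qed

lemma th_lin: assumes "x \<in> CG" "a \<in> D (gi x)" "r \<in> S"
  shows "\<theta> x (a \<cdot> r) = \<theta> x a \<cdot> \<theta> x (iv a \<cdot> (a \<cdot> r))" "iv a \<cdot> (a \<cdot> r) \<in> D (gi x)"
proof -
  have x': "gi x \<in> CG" using assms by simp
  have aS: "a \<in> S" using Dsub x' assms by blast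
  show m: "iv a \<cdot> (a \<cdot> r) \<in> D (gi x)" using DL DR assms x' aS by auto
  have "a \<cdot> r = a \<cdot> (iv a \<cdot> (a \<cdot> r))" using aS assms by (simp flip: assoc add: iv_props)
  then show "\<theta> x (a \<cdot> r) = \<theta> x a \<cdot> \<theta> x (iv a \<cdot> (a \<cdot> r))" using th_mul assms m by metis
qed

lemma tp_iv: assumes "x \<in> CG" "y \<in> CG" "p \<in> D (gi y)" "p \<in> D (gi (x \<diamond> y))"
  shows "R x y (\<theta> x (\<theta> y p)) = L x y (\<theta> (x \<diamond> y) p)"
proof -
  have sm: "setmul mul (D (gi y)) (D (gi y \<diamond> gi x)) = D (gi y) \<inter> D (gi (x \<diamond> y))"
    using setmulD assms by (simp add: G.inv_mult_group)
  have "\<theta> x (\<theta> y p) = snd (mult_inv (setmul mul (D x) (D (x \<diamond> y))) (w x y)) (L x y (\<theta> (x \<diamond> y) p))"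
  proof -
    have H: "\<forall>x\<in>CG. \<forall>y\<in>CG.
        \<forall>s\<in>setmul mul (D (gi y)) (D (gi y \<diamond> gi x)).
          \<theta> x (\<theta> y s) =
            snd (mult_inv (setmul mul (D x) (D (x \<diamond> y))) (w x y))
              (fst (w x y) (\<theta> (x \<diamond> y) s))"
      using tp unfolding twisted_partial_action_def by blast
    show ?thesis using H assms sm by simp
  qed
  also have "\<dots> = inv_into (T x y) (R x y) (L x y (\<theta> (x \<diamond> y) p))"
    using setmulD assms unfolding mult_inv_def by simp
  finally have e: "\<theta> x (\<theta> y p) = inv_into (T x y) (R x y) (L x y (\<theta> (x \<diamond> y) p))" .
  have "\<theta> (x \<diamond> y) p \<in> D (x \<diamond> y)" using th_mem assms by simp
  moreover have "\<theta> (x \<diamond> y) p \<in> D x"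
    using th3[of "x \<diamond> y" "gi y" p] assms by (simp add: G.m_assoc)
  ultimately have "L x y (\<theta> (x \<diamond> y) p) \<in> T x y" using WL_mem assms by blast
  then show ?thesis using e WR_inv assms by simp
qed

lemma tp_vi: assumes "x \<in> CG" "y \<in> CG" "z \<in> CG" "p \<in> D (gi x)" "p \<in> D y" "p \<in> D (y \<diamond> z)"
  shows "R x (y \<diamond> z) (\<theta> x (R y z p)) = R (x \<diamond> y) z (R x y (\<theta> x p))"
proof -
  have "setmul mul (setmul mul (D (gi x)) (D y)) (D (y \<diamond> z)) = D (gi x) \<inter> D y \<inter> D (y \<diamond> z)"
  proof -
    have i: "sg_ideal S mul (D (gi x) \<inter> D y)" using ideal_int[OF D_ideal D_ideal] assms by blast
    have "setmul mul (D (gi x)) (D y) = D (gi x) \<inter> D y" using setmulD assms by simp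
    then show ?thesis using setmul_ideal[OF i D_ideal] assms by simp
  qed
  moreover have H: "\<forall>x\<in>CG. \<forall>y\<in>CG. \<forall>z\<in>CG.
        \<forall>s\<in>setmul mul (setmul mul (D (gi x)) (D y)) (D (y \<diamond> z)).
          snd (w x (y \<diamond> z)) (\<theta> x (snd (w y z) s)) =
          snd (w (x \<diamond> y) z) (snd (w x y) (\<theta> x s))"
      using tp unfolding twisted_partial_action_def by blast
  ultimately show ?thesis using assms by simp
qed

end



context tpa
begin

abbreviation CP where "CP \<equiv> crossed_product G D"
abbreviation cpm where "cpm \<equiv> cp_mult G mul D \<theta> w"

lemma cp_eq: "cpm (s, x) (t, y) = (R x y (\<theta> x (thi x s \<cdot> t)), x \<diamond> y)"
  unfolding cp_mult_def by simp

lemma CP_mem: "(s, x) \<in> CP \<longleftrightarrow> x \<in> CG \<and> s \<in> D x"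
  unfolding crossed_product_def by simp

lemma core_mem: assumes "x \<in> CG" "y \<in> CG" "s \<in> D x" "t \<in> D y"
  shows "thi x s \<cdot> t \<in> D (gi x)" "thi x s \<cdot> t \<in> D y" "\<theta> x (thi x s \<cdot> t) \<in> T x y"
    "R x y (\<theta> x (thi x s \<cdot> t)) \<in> T x y"
proof -
  have u: "thi x s \<in> D (gi x)" using thi_mem assms by blast
  have uS: "thi x s \<in> S" using Dsub u assms by (meson G.inv_closed)
  have tS: "t \<in> S" using Dsub assms by blast
  show a: "thi x s \<cdot> t \<in> D (gi x)" using DR u tS assms by (meson G.inv_closed)
  show b: "thi x s \<cdot> t \<in> D y" using DL uS assms by blast
  show c: "\<theta> x (thi x s \<cdot> t) \<in> T x y" using th_mem th3 a b assms by blast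
  show "R x y (\<theta> x (thi x s \<cdot> t)) \<in> T x y" using WR_mem c assms by blast
qed

lemma assoc_core:
  assumes xyz: "x \<in> CG" "y \<in> CG" "z \<in> CG" and st: "s \<in> D x" "t \<in> D y" "r \<in> D z"
  shows "\<theta> (x \<diamond> y) (thi (x \<diamond> y) (R x y (\<theta> x (thi x s \<cdot> t))) \<cdot> r)
         = R x y (\<theta> x (thi x s \<cdot> \<theta> y (thi y t \<cdot> r)))"
proof -
  define u where "u = thi x s"
  define m where "m = \<theta> x (u \<cdot> t)"
  define a where "a = R x y m"
  define c where "c = thi (x \<diamond> y) a"
  define v where "v = thi y t"
  have gx: "gi x \<in> CG" and gy: "gi y \<in> CG" and xy: "x \<diamond> y \<in> CG" and gxy: "gi (x \<diamond> y) \<in> CG"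
    using xyz by auto
  have gxy': "gi (x \<diamond> y) = gi y \<diamond> gi x" using xyz by (simp add: G.inv_mult_group)
  have uD: "u \<in> D (gi x)" unfolding u_def using thi_mem xyz st by blast
  have uS: "u \<in> S" using Dsub uD gx by blast
  have tS: "t \<in> S" and rS: "r \<in> S" and sS: "s \<in> S" using Dsub xyz st by blast+
  have ut1: "u \<cdot> t \<in> D (gi x)" and ut2: "u \<cdot> t \<in> D y" using core_mem xyz st unfolding u_def by auto
  have utS: "u \<cdot> t \<in> S" using uS tS by simp
  have mT: "m \<in> T x y" using core_mem xyz st unfolding m_def u_def by auto
  have mS: "m \<in> S" using mT Dsub xyz by blast
  have aT: "a \<in> T x y" using core_mem xyz st unfolding a_def m_def u_def by auto
  have a2: "a \<in> D (x \<diamond> y \<diamond> gi y)" using aT xyz by (simp add: G.m_assoc)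
  have cD1: "c \<in> D (gi (x \<diamond> y))" unfolding c_def using thi_mem aT xy by blast
  have cD2: "c \<in> D (gi y)" unfolding c_def using thi3[OF xy gy] aT a2 by blast
  have cS: "c \<in> S" using cD2 Dsub gy by blast
  have thc: "\<theta> (x \<diamond> y) c = a" unfolding c_def using th_thi xy aT by blast
  have yc1: "\<theta> y c \<in> D y" using th_mem xyz cD2 by simp
  have yc2: "\<theta> y c \<in> D (gi x)" using th3[OF xyz(2) gxy] cD2 cD1 xyz
    by (simp add: gxy' flip: G.m_assoc)
  have ycS: "\<theta> y c \<in> S" using yc1 Dsub xyz by blast
  have xyc: "\<theta> x (\<theta> y c) \<in> T x y" using th_mem th3 xyz yc1 yc2 by blast
  have LmT: "L x y m \<in> T x y" using WL_mem mT xyz by blast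
  have Lm: "L x y m = \<theta> x (\<theta> y c)"
  proof (rule WR_inj[OF xyz(1,2) LmT xyc])
    have "R x y (L x y m) = L x y (R x y m)" using WLR_comm mT xyz by simp
    also have "\<dots> = L x y (\<theta> (x \<diamond> y) c)" using thc a_def by simp
    also have "\<dots> = R x y (\<theta> x (\<theta> y c))" using tp_iv xyz cD1 cD2 by simp
    finally show "R x y (L x y m) = R x y (\<theta> x (\<theta> y c))" .
  qed
  define E where "E = iv (u \<cdot> t) \<cdot> (u \<cdot> t)"
  have E1: "E \<in> D (gi x)" and E2: "E \<in> D y" unfolding E_def using DL ut1 ut2 utS gx xyz by auto
  have ES: "E \<in> S" using E1 Dsub gx by blast
  have thE: "\<theta> x E = iv m \<cdot> m" unfolding E_def m_def
    using th_mul th_iv xyz ut1 Div gx by simp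
  have icc1: "iv c \<cdot> c \<in> D (gi y)" and icc2: "iv c \<cdot> c \<in> D (gi (x \<diamond> y))"
    using DL cS cD1 cD2 gy gxy by auto
  have ivyc: "iv (\<theta> y c) \<in> D (gi x)" using Div yc2 gx by blast
  have thicc: "\<theta> y (iv c \<cdot> c) = E"
  proof (rule th_inj[OF xyz(1)])
    show "\<theta> y (iv c \<cdot> c) \<in> D (gi x)" using th_mul th_iv xyz cD2 Div gy DR ivyc ycS by auto
    show "E \<in> D (gi x)" by (rule E1)
    have "\<theta> x (\<theta> y (iv c \<cdot> c)) = \<theta> x (iv (\<theta> y c) \<cdot> \<theta> y c)"
      using th_mul th_iv xyz cD2 Div gy by simp
    also have "\<dots> = iv (\<theta> x (\<theta> y c)) \<cdot> \<theta> x (\<theta> y c)"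
      using th_mul th_iv xyz ivyc yc2 by simp
    also have "\<dots> = iv (L x y m) \<cdot> L x y m" using Lm by simp
    also have "\<dots> = iv m \<cdot> m" using WL_idem xyz mT by blast
    finally show "\<theta> x (\<theta> y (iv c \<cdot> c)) = \<theta> x E" using thE by simp
  qed
  define A where "A = \<theta> (x \<diamond> y) (c \<cdot> r)"
  have cr1: "c \<cdot> r \<in> D (gi y)" and cr2: "c \<cdot> r \<in> D (gi (x \<diamond> y))" using DR cD1 cD2 rS gy gxy by auto
  have AT: "A \<in> T x y" unfolding A_def using th_mem xy cr2 th3[OF xy gy cr2 cr1] xyz
    by (simp add: G.m_assoc)
  define k1 where "k1 = iv c \<cdot> (c \<cdot> r)"
  have k1a: "k1 \<in> D (gi y)" and k1b: "k1 \<in> D (gi (x \<diamond> y))"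
    unfolding k1_def using DL[OF gy _ cr1] DL[OF gxy _ cr2] iv_in[OF cS] by auto
  have yk1: "\<theta> y k1 \<in> D y" "\<theta> y k1 \<in> D (gi x)" using th_mem xyz k1a
    using th3[OF xyz(2) gxy k1a k1b] by (auto simp: gxy' simp flip: G.m_assoc)
  define \<psi> where "\<psi> = \<theta> x (\<theta> y k1)"
  have \<psi>T: "\<psi> \<in> T x y" unfolding \<psi>_def using th_mem th3 xyz yk1 by blast
  have "L x y A = R x y (\<theta> x (\<theta> y (c \<cdot> r)))" unfolding A_def using tp_iv xyz cr1 cr2 by simp
  also have "\<theta> y (c \<cdot> r) = \<theta> y c \<cdot> \<theta> y k1" unfolding k1_def using th_lin xyz cD2 rS by blast
  also have "\<theta> x (\<theta> y c \<cdot> \<theta> y k1) = L x y m \<cdot> \<psi>" unfolding \<psi>_def Lm using th_mul xyz yc2 yk1 by blast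
  also have "R x y (L x y m \<cdot> \<psi>) = L x y m \<cdot> R x y \<psi>" using WR_mul LmT \<psi>T xyz by blast
  finally have LA: "L x y A = L x y m \<cdot> R x y \<psi>" .
  have vD: "v \<in> D (gi y)" unfolding v_def using thi_mem xyz st by blast
  have vS: "v \<in> S" using vD Dsub gy by blast
  have thv: "\<theta> y v = t" unfolding v_def using th_thi xyz st by blast
  define k where "k = \<theta> y (iv v \<cdot> (v \<cdot> r))"
  have ivvr: "iv v \<cdot> (v \<cdot> r) \<in> D (gi y)" using th_lin xyz vD rS by blast
  have kD: "k \<in> D y" unfolding k_def using th_mem ivvr xyz by blast
  have kS: "k \<in> S" using kD Dsub xyz by blast
  have thvr: "\<theta> y (v \<cdot> r) = t \<cdot> k" unfolding k_def using th_lin(1)[OF xyz(2) vD rS] thv by simp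
  define p where "p = u \<cdot> \<theta> y (v \<cdot> r)"
  have "p = (u \<cdot> t) \<cdot> k" unfolding p_def thvr using assoc[OF uS tS kS] by simp
  also have "\<dots> = (u \<cdot> t) \<cdot> (E \<cdot> k)"
  proof -
    have "(u \<cdot> t) \<cdot> (E \<cdot> k) = ((u \<cdot> t) \<cdot> E) \<cdot> k" using utS ES kS by (rule assoc[symmetric])
    also have "(u \<cdot> t) \<cdot> E = u \<cdot> t" unfolding E_def by (rule aia[OF utS])
    finally show ?thesis by simp
  qed
  finally have peq: "p = (u \<cdot> t) \<cdot> (E \<cdot> k)" .
  have Ek1: "E \<cdot> k \<in> D (gi x)" and Ek2: "E \<cdot> k \<in> D y" using DR[OF gx kS E1] DL[OF xyz(2) ES kD] by auto
  define \<chi> where "\<chi> = \<theta> x (E \<cdot> k)"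
  have \<chi>T: "\<chi> \<in> T x y" unfolding \<chi>_def using th_mem th3 xyz Ek1 Ek2 by blast
  have thp: "\<theta> x p = m \<cdot> \<chi>" unfolding peq m_def \<chi>_def using th_mul[OF xyz(1) ut1 Ek1] by simp
  define B where "B = R x y (\<theta> x p)"
  have BB: "B = m \<cdot> R x y \<chi>" unfolding B_def thp using WR_mul[OF xyz(1,2) mT \<chi>T] by simp
  have EkS: "E \<cdot> k \<in> S" using ES kS by simp
  have pD: "p \<in> D (gi x)" "p \<in> D y" unfolding peq using DR[OF gx EkS ut1] DL[OF xyz(2) utS Ek2] by auto
  have BT: "B \<in> T x y" unfolding B_def
  proof (rule WR_mem[OF xyz(1,2)])
    show "\<theta> x p \<in> T x y" using th_mem[OF xyz(1) pD(1)] th3[OF xyz(1,2) pD] by simp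
  qed
  have RcT: "R x y \<chi> \<in> T x y" using WR_mem[OF xyz(1,2) \<chi>T] .
  have LB: "L x y B = L x y m \<cdot> R x y \<chi>" unfolding BB using WL_mul[OF xyz(1,2) mT RcT] by simp
  have ivt: "E \<cdot> (iv t \<cdot> t) = E"
  proof -
    have "E = iv t \<cdot> (iv u \<cdot> (u \<cdot> t))" unfolding E_def using iv_mul uS tS by (simp add: assoc)
    then show ?thesis using uS tS by (simp add: assoc aia)
  qed
  have ivv: "(iv c \<cdot> c) \<cdot> (iv v \<cdot> v) = iv c \<cdot> c"
  proof (rule th_inj[OF xyz(2)])
    show "(iv c \<cdot> c) \<cdot> (iv v \<cdot> v) \<in> D (gi y)" using DR icc1 vS gy by auto
    show "iv c \<cdot> c \<in> D (gi y)" by (rule icc1)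
    have ivD: "iv v \<in> D (gi y)" using Div[OF gy vD] .
    have ivvD: "iv v \<cdot> v \<in> D (gi y)" using DR[OF gy vS ivD] .
    have "\<theta> y ((iv c \<cdot> c) \<cdot> (iv v \<cdot> v)) = \<theta> y (iv c \<cdot> c) \<cdot> \<theta> y (iv v \<cdot> v)"
      using th_mul[OF xyz(2) icc1 ivvD] .
    also have "\<theta> y (iv v \<cdot> v) = iv t \<cdot> t" using th_mul[OF xyz(2) ivD vD] th_iv[OF xyz(2) vD] thv by simp
    finally show "\<theta> y ((iv c \<cdot> c) \<cdot> (iv v \<cdot> v)) = \<theta> y (iv c \<cdot> c)" using thicc ivt by simp
  qed
  have "E \<cdot> k = \<theta> y ((iv c \<cdot> c) \<cdot> (iv v \<cdot> (v \<cdot> r)))"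
    unfolding k_def thicc[symmetric] using th_mul icc1 ivvr xyz by simp
  also have "(iv c \<cdot> c) \<cdot> (iv v \<cdot> (v \<cdot> r)) = ((iv c \<cdot> c) \<cdot> (iv v \<cdot> v)) \<cdot> r"
    using cS vS rS by (simp add: assoc)
  also have "\<dots> = k1" unfolding ivv k1_def using cS rS by (simp add: assoc)
  finally have "\<chi> = \<psi>" unfolding \<chi>_def \<psi>_def by simp
  then have "L x y A = L x y B" using LA LB by simp
  then have "A = B" using WL_inj AT BT xyz by blast
  then show ?thesis unfolding A_def B_def p_def c_def a_def m_def u_def v_def .
qed

end



lemma unique_inv_gen:
  fixes P (infixl "\<star>" 70)
  assumes cl: "\<And>a b. a \<in> X \<Longrightarrow> b \<in> X \<Longrightarrow> a \<star> b \<in> X"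
    and asc: "\<And>a b c. a \<in> X \<Longrightarrow> b \<in> X \<Longrightarrow> c \<in> X \<Longrightarrow> a \<star> b \<star> c = a \<star> (b \<star> c)"
    and com: "\<And>e f. e \<in> X \<Longrightarrow> f \<in> X \<Longrightarrow> e \<star> e = e \<Longrightarrow> f \<star> f = f \<Longrightarrow> e \<star> f = f \<star> e"
    and X: "a \<in> X" "b \<in> X" "c \<in> X"
    and b: "a \<star> b \<star> a = a" "b \<star> a \<star> b = b"
    and c: "a \<star> c \<star> a = a" "c \<star> a \<star> c = c"
  shows "b = c"
proof -
  have ba: "(b \<star> a) \<star> (b \<star> a) = b \<star> a" using b X asc cl by metis
  have ca: "(c \<star> a) \<star> (c \<star> a) = c \<star> a" using c X asc cl by metis
  have ab: "(a \<star> b) \<star> (a \<star> b) = a \<star> b" using b X asc cl by metis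
  have ac: "(a \<star> c) \<star> (a \<star> c) = a \<star> c" using c X asc cl by metis
  have "b = b \<star> (a \<star> c \<star> a) \<star> b" using b c by simp
  also have "\<dots> = ((b \<star> a) \<star> (c \<star> a)) \<star> b" using X cl asc by metis
  also have "(b \<star> a) \<star> (c \<star> a) = (c \<star> a) \<star> (b \<star> a)" using com ba ca X cl by blast
  also have "(c \<star> a) \<star> (b \<star> a) \<star> b = c \<star> (a \<star> b \<star> a) \<star> b" using X cl asc by metis
  also have "\<dots> = c \<star> a \<star> b" using b by simp
  finally have 1: "b = c \<star> a \<star> b" .
  have "c = c \<star> (a \<star> b \<star> a) \<star> c" using b c by simp
  also have "\<dots> = c \<star> ((a \<star> b) \<star> (a \<star> c))" using X cl asc by metis
  also have "(a \<star> b) \<star> (a \<star> c) = (a \<star> c) \<star> (a \<star> b)" using com ab ac X cl by blast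
  also have "c \<star> ((a \<star> c) \<star> (a \<star> b)) = (c \<star> a \<star> c) \<star> a \<star> b" using X cl asc by metis
  also have "\<dots> = c \<star> a \<star> b" using c by simp
  finally have 2: "c = c \<star> a \<star> b" .
  show ?thesis using 1 2 by simp
qed

context tpa
begin

lemma w1: "x \<in> CG \<Longrightarrow> s \<in> D x \<Longrightarrow> L \<one>\<^bsub>G\<^esub> x s = s \<and> R \<one>\<^bsub>G\<^esub> x s = s \<and> L x \<one>\<^bsub>G\<^esub> s = s \<and> R x \<one>\<^bsub>G\<^esub> s = s"
  using tp unfolding twisted_partial_action_def by blast

lemma thi1: "g \<in> S \<Longrightarrow> thi \<one>\<^bsub>G\<^esub> g = g"
  using thi_th[of "\<one>\<^bsub>G\<^esub>" g] th1 D1 by simp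

lemma cp_one: "g \<in> S \<Longrightarrow> z \<in> CG \<Longrightarrow> t \<in> D z \<Longrightarrow> cpm (g, \<one>\<^bsub>G\<^esub>) (t, z) = (g \<cdot> t, z)"
proof -
  assume a: "g \<in> S" "z \<in> CG" "t \<in> D z"
  have gt: "g \<cdot> t \<in> D z" using DL a by blast
  have gtS: "g \<cdot> t \<in> S" using gt Dsub a by blast
  show ?thesis unfolding cp_eq thi1[OF a(1)] th1[OF gtS] using w1 a gt by simp
qed

lemma cp_closed: "p \<in> CP \<Longrightarrow> q \<in> CP \<Longrightarrow> cpm p q \<in> CP"
proof -
  assume "p \<in> CP" "q \<in> CP"
  then obtain s x t y where p: "p = (s, x)" "x \<in> CG" "s \<in> D x" and q: "q = (t, y)" "y \<in> CG" "t \<in> D y"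
    by (metis CP_mem surj_pair)
  show ?thesis unfolding p q cp_eq CP_mem using core_mem(4)[OF p(2) q(2) p(3) q(3)] p q by auto
qed

lemma cp_assoc: "p \<in> CP \<Longrightarrow> q \<in> CP \<Longrightarrow> o' \<in> CP \<Longrightarrow> cpm (cpm p q) o' = cpm p (cpm q o')"
proof -
  assume "p \<in> CP" "q \<in> CP" "o' \<in> CP"
  then obtain s x t y r z where p: "p = (s, x)" "x \<in> CG" "s \<in> D x" and q: "q = (t, y)" "y \<in> CG" "t \<in> D y"
    and o: "o' = (r, z)" "z \<in> CG" "r \<in> D z"
    by (metis CP_mem surj_pair)
  define qq where "qq = \<theta> y (thi y t \<cdot> r)"
  have qqT: "qq \<in> T y z" unfolding qq_def using core_mem(3)[OF q(2) o(2) q(3) o(3)] .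
  have u: "thi x s \<in> D (gi x)" using thi_mem p by blast
  have uS: "thi x s \<in> S" using Dsub u p by (meson G.inv_closed)
  have qqS: "qq \<in> S" using qqT Dsub q by blast
  have e1: "thi x s \<cdot> R y z qq = R y z (thi x s \<cdot> qq)" using WR_ext[OF q(2) o(2) uS qqT] .
  have pp: "thi x s \<cdot> qq \<in> D (gi x)" "thi x s \<cdot> qq \<in> D y" "thi x s \<cdot> qq \<in> D (y \<diamond> z)"
    using DR[OF _ qqS u] DL[OF _ uS] qqT p q o by auto
  have e2: "R x (y \<diamond> z) (\<theta> x (R y z (thi x s \<cdot> qq))) = R (x \<diamond> y) z (R x y (\<theta> x (thi x s \<cdot> qq)))"
    using tp_vi[OF p(2) q(2) o(2) pp] .
  have e3: "\<theta> (x \<diamond> y) (thi (x \<diamond> y) (R x y (\<theta> x (thi x s \<cdot> t))) \<cdot> r) = R x y (\<theta> x (thi x s \<cdot> qq))"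
    unfolding qq_def using assoc_core[OF p(2) q(2) o(2) p(3) q(3) o(3)] .
  show ?thesis unfolding p q o cp_eq using e1 e2 e3 p q o by (simp add: G.m_assoc qq_def)
qed

lemma cp_idem: assumes "p \<in> CP" "cpm p p = p" shows "\<exists>e. p = (e, \<one>\<^bsub>G\<^esub>) \<and> e \<in> S \<and> e \<cdot> e = e"
proof -
  obtain s x where p: "p = (s, x)" "x \<in> CG" "s \<in> D x" using assms by (metis CP_mem surj_pair)
  have "x \<diamond> x = x" using assms(2) unfolding p(1) cp_eq by simp
  then have x1: "x = \<one>\<^bsub>G\<^esub>" using p by (metis G.l_cancel_one')
  have sS: "s \<in> S" using p Dsub by blast
  have "cpm p p = (s \<cdot> s, \<one>\<^bsub>G\<^esub>)" using cp_one[OF sS] p x1 by simp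
  then show ?thesis using assms p x1 sS by auto
qed

lemma cp_idem_comm: "e \<in> CP \<Longrightarrow> f \<in> CP \<Longrightarrow> cpm e e = e \<Longrightarrow> cpm f f = f \<Longrightarrow> cpm e f = cpm f e"
proof -
  assume a: "e \<in> CP" "f \<in> CP" "cpm e e = e" "cpm f f = f"
  obtain e' where e: "e = (e', \<one>\<^bsub>G\<^esub>)" "e' \<in> S" "e' \<cdot> e' = e'" using cp_idem a by blast
  obtain f' where f: "f = (f', \<one>\<^bsub>G\<^esub>)" "f' \<in> S" "f' \<cdot> f' = f'" using cp_idem a by blast
  show ?thesis unfolding e f using cp_one[of e' "\<one>\<^bsub>G\<^esub>" f'] cp_one[of f' "\<one>\<^bsub>G\<^esub>" e'] e f D1
    idem_comm[of e' f'] by simp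
qed

end



context tpa
begin

lemma cp_inv_ok:
  assumes x: "x \<in> CG" and s: "s \<in> D x"
  defines "b \<equiv> inv_into (T (gi x) x) (L (gi x) x) (\<theta> (gi x) (iv s))"
  shows "b \<in> D (gi x)" "cpm (cpm (s, x) (b, gi x)) (s, x) = (s, x)"
    "cpm (cpm (b, gi x) (s, x)) (b, gi x) = (b, gi x)"
proof -
  define y where "y = gi x"
  have y: "y \<in> CG" and yx: "y \<diamond> x = \<one>\<^bsub>G\<^esub>" and xy: "x \<diamond> y = \<one>\<^bsub>G\<^esub>" and giy: "gi y = x"
    unfolding y_def using x by auto
  have Tyx: "T y x = D y" using yx D1 Dsub y by auto
  have Txy: "T x y = D x" using xy D1 Dsub x by auto
  have sS: "s \<in> S" using s Dsub x by blast
  have ivs: "iv s \<in> D x" using Div x s by blast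
  have ivsS: "iv s \<in> S" using sS by simp
  have ths: "\<theta> y (iv s) \<in> D y" using th_mem[OF y] ivs giy by simp
  have bb: "b \<in> T y x" "L y x b = \<theta> y (iv s)"
    using WL_inv[OF y x] ths Tyx unfolding b_def y_def[symmetric] by auto
  have bD: "b \<in> D y" using bb Tyx by simp
  then show "b \<in> D (gi x)" unfolding y_def .
  have bS: "b \<in> S" using bD Dsub y by blast
  have bD': "b \<in> D (gi x)" using bD y_def by simp
  define c where "c = \<theta> x b"
  have cD: "c \<in> D x" unfolding c_def using th_mem x bD' by blast
  have cT: "c \<in> T x y" using cD Txy by simp
  define d where "d = \<theta> x (\<theta> y (iv s))"
  have ths': "\<theta> y (iv s) \<in> D (gi x)" using ths y_def by simp
  have dD: "d \<in> D x" unfolding d_def using th_mem x ths' by blast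
  have key: "\<And>q'. q' \<in> D x \<Longrightarrow> q' \<cdot> d = q' \<cdot> L x y c"
  proof -
    fix q' assume q': "q' \<in> D x"
    define q where "q = thi x q'"
    have qD: "q \<in> D (gi x)" unfolding q_def using thi_mem x q' by blast
    have thq: "\<theta> x q = q'" unfolding q_def using th_thi x q' by blast
    have qT: "q \<in> T y x" using qD Tyx y_def by simp
    have m1: "q \<cdot> L y x b = R y x q \<cdot> b" using WLR_mid[OF y x qT bb(1)] .
    have RqT: "R y x q \<in> T y x" using WR_mem[OF y x qT] .
    hence RqD: "R y x q \<in> D (gi x)" using Tyx y_def by simp
    have m2: "\<theta> x (q \<cdot> \<theta> y (iv s)) = q' \<cdot> d" unfolding d_def using th_mul[OF x qD ths'] thq by simp
    have m3: "\<theta> x (R y x q \<cdot> b) = \<theta> x (R y x q) \<cdot> c" unfolding c_def using th_mul[OF x RqD bD'] .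
    have qD1: "q \<in> D y" using qD y_def by simp
    have qD2: "q \<in> D (y \<diamond> x)" using yx D1 qD1 Dsub y by auto
    have vi: "R x (y \<diamond> x) (\<theta> x (R y x q)) = R (x \<diamond> y) x (R x y (\<theta> x q))"
      using tp_vi[OF x y x qD qD1 qD2] .
    have a1: "\<theta> x (R y x q) \<in> D x" using th_mem x RqD by blast
    have a2: "R x y q' \<in> D x" using WR_mem[OF x y] q' Txy by auto
    have m4: "\<theta> x (R y x q) = R x y q'" using vi w1[OF x a1] w1[OF x a2] thq yx xy by simp
    have m5: "R x y q' \<cdot> c = q' \<cdot> L x y c" using WLR_mid[OF x y] q' cT Txy by auto
    show "q' \<cdot> d = q' \<cdot> L x y c" using m1 m2 m3 m4 m5 bb(2) by simp
  qed
  have LcT: "L x y c \<in> T x y" using WL_mem[OF x y cT] .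
  have LcD: "L x y c \<in> D x" using LcT Txy by simp
  have dS: "d \<in> S" and LcS: "L x y c \<in> S" using dD LcD Dsub x by blast+
  have dL: "d = L x y c"
  proof (rule cancel_eq[OF dS LcS])
    have "d \<cdot> iv d \<in> D x" using DL[OF x] dD Div[OF x dD] dS by blast
    then show "d \<cdot> iv d \<cdot> L x y c = d" using key[of "d \<cdot> iv d"] dS iv_props(2) by simp
    have "L x y c \<cdot> iv (L x y c) \<in> D x" using DL[OF x] LcD Div[OF x LcD] LcS by blast
    then show "L x y c \<cdot> iv (L x y c) \<cdot> d = L x y c" using key[of "L x y c \<cdot> iv (L x y c)"] LcS iv_props(2) by simp
  qed
  have ivsT: "iv s \<in> T x y" using ivs Txy by simp
  have "R x y d = L x y (\<theta> (x \<diamond> y) (iv s))" unfolding d_def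
    using tp_iv[OF x y] ivs giy xy D1 ivsS by simp
  also have "\<dots> = L x y (iv s)" using xy th1 ivsS by simp
  finally have Rd: "R x y d = L x y (iv s)" .
  have RcT: "R x y c \<in> T x y" using WR_mem[OF x y cT] .
  have Rc: "R x y c = iv s"
  proof (rule WL_inj[OF x y RcT ivsT])
    show "L x y (R x y c) = L x y (iv s)" using WLR_comm[OF x y cT] dL Rd by simp
  qed
  have u: "thi x s \<in> D (gi x)" using thi_mem x s by blast
  have p1: "cpm (s, x) (b, gi x) = (s \<cdot> iv s, \<one>\<^bsub>G\<^esub>)"
  proof -
    have "\<theta> x (thi x s \<cdot> b) = s \<cdot> c" unfolding c_def using th_mul[OF x u bD'] th_thi[OF x s] by simp
    moreover have "R x y (s \<cdot> c) = s \<cdot> R x y c" using WR_mul[OF x y] s cT Txy by auto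
    ultimately show ?thesis unfolding cp_eq using Rc xy y_def by simp
  qed
  show "cpm (cpm (s, x) (b, gi x)) (s, x) = (s, x)"
    unfolding p1 using cp_one[OF _ x s] sS iv_props(2)[OF sS] by simp
  define v where "v = thi y b"
  have vD: "v \<in> D x" unfolding v_def using thi_mem[OF y bD] giy by simp
  have thv: "\<theta> y v = b" unfolding v_def using th_thi[OF y bD] .
  have sD': "s \<in> D (gi y)" using s giy by simp
  have vD': "v \<in> D (gi y)" using vD giy by simp
  have tys: "\<theta> y s \<in> D y" using th_mem[OF y sD'] .
  have tysS: "\<theta> y s \<in> S" using tys Dsub y by blast
  have btT: "b \<cdot> \<theta> y s \<in> T y x" using DR[OF y tysS bD] Tyx by simp
  define h where "h = R y x (b \<cdot> \<theta> y s)"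
  have hT: "h \<in> T y x" unfolding h_def using WR_mem[OF y x btT] .
  have hS: "h \<in> S" using hT Tyx Dsub y by auto
  have p2: "cpm (b, y) (s, x) = (h, \<one>\<^bsub>G\<^esub>)"
    unfolding cp_eq h_def v_def[symmetric] using th_mul[OF y vD' sD'] thv yx by simp
  define e where "e = \<theta> y (s \<cdot> iv s)"
  have siv: "s \<cdot> iv s \<in> D (gi y)" using DR[OF x ivsS s] giy by simp
  have eD: "e \<in> D y" unfolding e_def using th_mem[OF y siv] .
  have eS: "e \<in> S" using eD Dsub y by blast
  have ivsD': "iv s \<in> D (gi y)" using ivs giy by simp
  have "h \<cdot> b = (b \<cdot> \<theta> y s) \<cdot> L y x b" unfolding h_def using WLR_mid[OF y x btT bb(1)] by simp
  also have "\<dots> = b \<cdot> (\<theta> y s \<cdot> \<theta> y (iv s))" using bb(2) bS tysS ths Dsub y by (simp add: assoc)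
  also have "\<theta> y s \<cdot> \<theta> y (iv s) = e" unfolding e_def using th_mul[OF y sD' ivsD'] by simp
  finally have hb: "h \<cdot> b = b \<cdot> e" .
  have beT: "b \<cdot> e \<in> T y x" using DR[OF y eS bD] Tyx by simp
  have eT: "e \<in> T y x" using eD Tyx by simp
  have "b \<cdot> e = b"
  proof (rule WL_inj[OF y x beT bb(1)])
    have "L y x (b \<cdot> e) = \<theta> y (iv s) \<cdot> e" using WL_mul[OF y x bb(1) eT] bb(2) by simp
    also have "\<dots> = \<theta> y (iv s \<cdot> (s \<cdot> iv s))" unfolding e_def using th_mul[OF y ivsD' siv] by simp
    also have "iv s \<cdot> (s \<cdot> iv s) = iv s" using iai[OF sS] .
    finally show "L y x (b \<cdot> e) = L y x b" using bb(2) by simp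
  qed
  then show "cpm (cpm (b, gi x) (s, x)) (b, gi x) = (b, gi x)"
    unfolding y_def[symmetric] p2 using cp_one[OF hS y bD] hb by simp
qed

end



theorem lemma5p12:
  fixes G :: "('g, 'c) monoid_scheme"
    and S :: "'a set" and mul :: "'a \<Rightarrow> 'a \<Rightarrow> 'a"
    and D :: "'g \<Rightarrow> 'a set" and \<theta> :: "'g \<Rightarrow> 'a \<Rightarrow> 'a"
    and w :: "'g \<Rightarrow> 'g \<Rightarrow> ('a \<Rightarrow> 'a) \<times> ('a \<Rightarrow> 'a)"
  assumes "group G"
    and "inverse_semigroup_on S mul"
    and "twisted_partial_action G S mul D \<theta> w"
  shows "inverse_semigroup_on (crossed_product G D) (cp_mult G mul D \<theta> w) \<and>
    (\<forall>s x. (s, x) \<in> crossed_product G D \<longrightarrow>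
       sg_inv (crossed_product G D) (cp_mult G mul D \<theta> w) (s, x) =
         (fst (mult_inv (setmul mul (D (inv\<^bsub>G\<^esub> x)) (D (inv\<^bsub>G\<^esub> x \<otimes>\<^bsub>G\<^esub> x)))
                        (w (inv\<^bsub>G\<^esub> x) x))
              (\<theta> (inv\<^bsub>G\<^esub> x) (sg_inv S mul s)),
          inv\<^bsub>G\<^esub> x))"
proof -
  interpret tpa S mul G D \<theta> w
    unfolding tpa_def tpa_axioms_def invsg_def using assms by auto
  have sg: "semigroup_on CP cpm" unfolding semigroup_on_def using cp_closed cp_assoc by blast
  have uq: "\<And>a b c. a \<in> CP \<Longrightarrow> b \<in> CP \<Longrightarrow> c \<in> CP \<Longrightarrow> cpm (cpm a b) a = a \<Longrightarrow> cpm (cpm b a) b = b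
      \<Longrightarrow> cpm (cpm a c) a = a \<Longrightarrow> cpm (cpm c a) c = c \<Longrightarrow> b = c"
    by (rule unique_inv_gen[where P = cpm and X = CP]) (auto intro: cp_closed cp_assoc cp_idem_comm)
  define f where "f = (\<lambda>s x. (inv_into (T (gi x) x) (L (gi x) x) (\<theta> (gi x) (iv s)), gi x))"
  have fok: "\<And>s x. (s, x) \<in> CP \<Longrightarrow> f s x \<in> CP \<and> cpm (cpm (s, x) (f s x)) (s, x) = (s, x)
      \<and> cpm (cpm (f s x) (s, x)) (f s x) = f s x"
    unfolding f_def using cp_inv_ok CP_mem by auto
  have eu: "\<And>p. p \<in> CP \<Longrightarrow> \<exists>!b. b \<in> CP \<and> cpm (cpm p b) p = p \<and> cpm (cpm b p) b = b"
  proof -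
    fix p assume p: "p \<in> CP"
    obtain s x where sx: "p = (s, x)" by (metis surj_pair)
    show "\<exists>!b. b \<in> CP \<and> cpm (cpm p b) p = p \<and> cpm (cpm b p) b = b"
      using fok[of s x] p uq[of p] unfolding sx by metis
  qed
  have part1: "inverse_semigroup_on CP cpm" unfolding inverse_semigroup_on_def using sg eu by blast
  have part2: "sg_inv CP cpm (s, x) = f s x" if sx: "(s, x) \<in> CP" for s x
    unfolding sg_inv_def
    by (rule the1_equality[OF eu[OF sx]]) (use fok[OF sx] in auto)
  have fe: "fst (mult_inv (setmul mul (D (gi x)) (D (gi x \<diamond> x))) (w (gi x) x)) = inv_into (T (gi x) x) (L (gi x) x)"
    if "x \<in> CG" for x
    using setmulD that unfolding mult_inv_def by simp
  show ?thesis using part1 part2 fe unfolding f_def CP_mem by auto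
qed


end
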